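(* Let $m,m_P,m_W$ be positive integers and let $\eta^\infty=(\eta^\infty_{s,(x,\mu)})$ be a left stochastic matrix (nonnegative entries, each column summing to $1$) with row index $s\in\{1,\dots,m\}$ and column index $(x,\mu)\in\{-1,1\}^{m_W}\times\{0,1,\dots,m_P\}$, $x=(x_1,\dots,x_{m_W})$. Define the partition \[ S^P=\Big\{s:\sum_{x\in\{-1,1\}^{m_W}}\eta^\infty_{s,(x,0)}=0\Big\},\qquad S^W=\Big\{s:\sum_{x\in\{-1,1\}^{m_W}}\eta^\infty_{s,(x,0)}>0\Big\} \] of $\{1,\dots,m\}$. Then: (i) the numbers $\overline{\eta}_{s,\mu}=2^{-m_W}\sum_x\eta^\infty_{s,(x,\mu)}$, $(s,\mu)\in S^P\times\{1,\dots,m_P\}$, satisfy $0\le\overline{\eta}_{s,\mu}\le1$ for all such $(s,\mu)$ and $\sum_{s\in S^P}\overline{\eta}_{s,\mu}\le1$ for all $\mu\in\{1,\dots,m_P\}$; (ii) the singular values of the real matrix $E$ with entries \[ E_{s,\nu}=2^{-m_W/2}\,\frac{\sum_x x_{\nu-m_P}\,\eta^\infty_{s,(x,0)}}{\sqrt{\sum_x\eta^\infty_{s,(x,0)}}},\qquad (s,\nu)\in S^W\times\{m_P+1,\dots,m_P+m_W\}, \] all belong to $[0,1]$. *)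

theory Defs
  imports Complex_Main "Jordan_Normal_Form.Char_Poly"
begin

text \<open>Sign vectors x in {-1,1}^n, represented as real lists of length n;
  the paper's component x_i (1-based) is x ! (i - 1).\<close>
definition pm_vectors :: "nat \<Rightarrow> real list set" where
  "pm_vectors n = {xs. length xs = n \<and> set xs \<subseteq> {-1, 1}}"

definition singular_value :: "real mat \<Rightarrow> real \<Rightarrow> bool" where
  "singular_value E \<sigma> \<longleftrightarrow> \<sigma> \<ge> 0 \<and> eigenvalue (transpose_mat E * E) (\<sigma>\<^sup>2)"

end

theory Submission
  imports Defs
begin

lemma pm_Suc: "pm_vectors (Suc n) = Cons (-1) ` pm_vectors n \<union> Cons 1 ` pm_vectors n"
proof -
  have *: "x \<in> pm_vectors (Suc n) \<longleftrightarrow> x \<in> Cons (-1) ` pm_vectors n \<union> Cons 1 ` pm_vectors n" for x :: "real list"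
  proof (cases x)
    case Nil then show ?thesis by (auto simp: pm_vectors_def)
  next
    case (Cons a xs) then show ?thesis by (auto simp: pm_vectors_def)
  qed
  show ?thesis using * by blast
qed

lemma pm_finite: "finite (pm_vectors n)"
  by (induction n) (auto simp: pm_Suc, simp add: pm_vectors_def)

lemma pm_sum_Suc: "sum g (pm_vectors (Suc n)) = (\<Sum>xs\<in>pm_vectors n. g ((-1)#xs) + g (1#xs))"
proof -
  have d: "Cons (-1) ` pm_vectors n \<inter> Cons (1::real) ` pm_vectors n = {}" by auto
  show ?thesis
    unfolding pm_Suc
    by (subst sum.union_disjoint) (auto simp: pm_finite d sum.reindex sum.distrib)
qed

lemma pm_card: "card (pm_vectors n) = 2 ^ n"
proof (induction n)
  case 0
  have "pm_vectors 0 = {[]}" by (auto simp: pm_vectors_def)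
  then show ?case by simp
next
  case (Suc n)
  have d: "Cons (-1) ` pm_vectors n \<inter> Cons (1::real) ` pm_vectors n = {}" by auto
  have "card (pm_vectors (Suc n)) = card (Cons (-1) ` pm_vectors n) + card (Cons (1::real) ` pm_vectors n)"
    unfolding pm_Suc by (rule card_Un_disjoint) (auto simp: pm_finite d)
  also have "\<dots> = 2 * card (pm_vectors n)" by (simp add: card_image)
  finally show ?case using Suc by simp
qed

lemma pm_sq: "(\<Sum>x\<in>pm_vectors n. (\<Sum>j<n. x!j * v j)\<^sup>2) = 2 ^ n * (\<Sum>j<n. (v j)\<^sup>2)"
proof (induction n arbitrary: v)
  case 0
  have "pm_vectors 0 = {[]}" by (auto simp: pm_vectors_def)
  then show ?case by simp
next
  case (Suc n)
  have e: "(\<Sum>j<Suc n. (a#xs)!j * v j) = a * v 0 + (\<Sum>j<n. xs!j * v (Suc j))" for a xs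
    by (subst sum.lessThan_Suc_shift) simp
  have "(\<Sum>x\<in>pm_vectors (Suc n). (\<Sum>j<Suc n. x!j * v j)\<^sup>2)
     = (\<Sum>xs\<in>pm_vectors n. 2 * (v 0)\<^sup>2 + 2 * (\<Sum>j<n. xs!j * v (Suc j))\<^sup>2)"
    unfolding pm_sum_Suc e by (simp add: power2_eq_square algebra_simps)
  also have "\<dots> = 2 * (v 0)\<^sup>2 * 2^n + 2 * (2^n * (\<Sum>j<n. (v (Suc j))\<^sup>2))"
    by (simp add: sum.distrib sum_distrib_left[symmetric] Suc[of "\<lambda>j. v (Suc j)"] pm_card)
  also have "\<dots> = 2 ^ Suc n * (\<Sum>j<Suc n. (v j)\<^sup>2)"
    by (subst sum.lessThan_Suc_shift) (simp add: algebra_simps)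
  finally show ?case .
qed

lemma wcs:
  fixes f w :: "'a \<Rightarrow> real"
  assumes "finite A" "\<And>x. x \<in> A \<Longrightarrow> w x \<ge> 0" "(\<Sum>x\<in>A. w x) > 0"
  shows "(\<Sum>x\<in>A. f x * w x)\<^sup>2 / (\<Sum>x\<in>A. w x) \<le> (\<Sum>x\<in>A. (f x)\<^sup>2 * w x)"
proof -
  define W where "W = (\<Sum>x\<in>A. w x)"
  define a where "a = (\<Sum>x\<in>A. f x * w x)"
  define B where "B = (\<Sum>x\<in>A. (f x)\<^sup>2 * w x)"
  define t where "t = a / W"
  have W: "W > 0" using assms W_def by simp
  have "0 \<le> (\<Sum>x\<in>A. w x * (f x - t)\<^sup>2)" using assms by (intro sum_nonneg) auto
  also have "\<dots> = B - 2 * t * a + t\<^sup>2 * W"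
    unfolding B_def a_def W_def
    by (simp add: power2_eq_square algebra_simps sum.distrib sum_subtractf sum_distrib_left sum_distrib_right)
  also have "\<dots> = B - a\<^sup>2 / W" using W unfolding t_def by (simp add: power2_eq_square field_simps)
  finally show ?thesis unfolding a_def B_def W_def by simp
qed

theorem lemma1:
  fixes m mP mW :: nat
    and eta :: "nat \<Rightarrow> real list \<times> nat \<Rightarrow> real"
    and SP SW :: "nat set"
    and etabar :: "nat \<Rightarrow> nat \<Rightarrow> real"
    and E :: "real mat"
  assumes "m > 0" "mP > 0" "mW > 0"
    and nonneg: "\<And>s x \<mu>. s \<in> {1..m} \<Longrightarrow> x \<in> pm_vectors mW \<Longrightarrow> \<mu> \<in> {0..mP} \<Longrightarrow> eta s (x, \<mu>) \<ge> 0"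
    and colsum: "\<And>x \<mu>. x \<in> pm_vectors mW \<Longrightarrow> \<mu> \<in> {0..mP} \<Longrightarrow> (\<Sum>s=1..m. eta s (x, \<mu>)) = 1"
    and SP_def: "SP = {s \<in> {1..m}. (\<Sum>x\<in>pm_vectors mW. eta s (x, 0)) = 0}"
    and SW_def: "SW = {s \<in> {1..m}. (\<Sum>x\<in>pm_vectors mW. eta s (x, 0)) > 0}"
    and etabar_def: "\<And>s \<mu>. etabar s \<mu> = (1 / 2 ^ mW) * (\<Sum>x\<in>pm_vectors mW. eta s (x, \<mu>))"
    and E_def: "E = mat (card SW) mW (\<lambda>(i, j).
          (let s = sorted_list_of_set SW ! i; \<nu> = mP + 1 + j in
            2 powr (- real mW / 2) *
            (\<Sum>x\<in>pm_vectors mW. x ! (\<nu> - mP - 1) * eta s (x, 0))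
            / sqrt (\<Sum>x\<in>pm_vectors mW. eta s (x, 0))))"
  shows "(\<forall>s\<in>SP. \<forall>\<mu>\<in>{1..mP}. 0 \<le> etabar s \<mu> \<and> etabar s \<mu> \<le> 1)
       \<and> (\<forall>\<mu>\<in>{1..mP}. (\<Sum>s\<in>SP. etabar s \<mu>) \<le> 1)
       \<and> (\<forall>\<sigma>. singular_value E \<sigma> \<longrightarrow> 0 \<le> \<sigma> \<and> \<sigma> \<le> 1)"
proof -
  let ?P = "pm_vectors mW"
  have finP: "finite ?P" by (rule pm_finite)
  have cardP: "real (card ?P) = 2 ^ mW" by (simp add: pm_card)
  have le1: "eta s (x, \<mu>) \<le> 1" if "s \<in> {1..m}" "x \<in> ?P" "\<mu> \<in> {0..mP}" for s x \<mu>
  proof -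
    have "eta s (x, \<mu>) \<le> (\<Sum>s=1..m. eta s (x, \<mu>))"
      by (rule member_le_sum) (use that nonneg in auto)
    then show ?thesis using colsum that by simp
  qed
  have SWsub: "SW \<subseteq> {1..m}" and SPsub: "SP \<subseteq> {1..m}" using SW_def SP_def by auto
  have colle: "(\<Sum>s\<in>A. eta s (x, \<mu>)) \<le> 1" if "A \<subseteq> {1..m}" "x \<in> ?P" "\<mu> \<in> {0..mP}" for A x \<mu>
  proof -
    have "(\<Sum>s\<in>A. eta s (x, \<mu>)) \<le> (\<Sum>s=1..m. eta s (x, \<mu>))"
      by (rule sum_mono2) (use that nonneg in auto)
    then show ?thesis using colsum that by simp
  qed
  have part1: "\<forall>s\<in>SP. \<forall>\<mu>\<in>{1..mP}. 0 \<le> etabar s \<mu> \<and> etabar s \<mu> \<le> 1"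
  proof (intro ballI conjI)
    fix s \<mu> assume s: "s \<in> SP" and mu: "\<mu> \<in> {1..mP}"
    then have s': "s \<in> {1..m}" and mu': "\<mu> \<in> {0..mP}" using SPsub by auto
    show "0 \<le> etabar s \<mu>" unfolding etabar_def
      by (intro mult_nonneg_nonneg sum_nonneg) (use nonneg s' mu' in auto)
    have "(\<Sum>x\<in>?P. eta s (x, \<mu>)) \<le> real (card ?P) * 1"
      by (rule sum_bounded_above) (use le1 s' mu' in auto)
    then show "etabar s \<mu> \<le> 1" unfolding etabar_def using cardP by simp
  qed
  have part2: "\<forall>\<mu>\<in>{1..mP}. (\<Sum>s\<in>SP. etabar s \<mu>) \<le> 1"
  proof
    fix \<mu> assume mu: "\<mu> \<in> {1..mP}"
    then have mu': "\<mu> \<in> {0..mP}" by auto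
    have "(\<Sum>s\<in>SP. etabar s \<mu>) = (1 / 2 ^ mW) * (\<Sum>x\<in>?P. \<Sum>s\<in>SP. eta s (x, \<mu>))"
      unfolding etabar_def by (simp add: sum_distrib_left sum.swap[of _ SP])
    also have "(\<Sum>x\<in>?P. \<Sum>s\<in>SP. eta s (x, \<mu>)) \<le> real (card ?P) * 1"
      by (rule sum_bounded_above) (use colle SPsub mu' in auto)
    finally show "(\<Sum>s\<in>SP. etabar s \<mu>) \<le> 1" using cardP by (simp add: divide_simps)
  qed
  have part3: "0 \<le> \<sigma> \<and> \<sigma> \<le> 1" if sv: "singular_value E \<sigma>" for \<sigma>
  proof -
    define sl where "sl = sorted_list_of_set SW"
    define w where "w s = (\<Sum>x\<in>?P. eta s (x, 0))" for s
    define c :: real where "c = 2 powr (- real mW / 2)"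
    have finSW: "finite SW" using SWsub finite_subset by blast
    have sl: "distinct sl" "set sl = SW" "length sl = card SW"
      unfolding sl_def using finSW by auto
    have c2: "c\<^sup>2 = 1 / 2 ^ mW"
    proof -
      have "c\<^sup>2 = 2 powr (- real mW / 2 + - real mW / 2)"
        unfolding c_def power2_eq_square by (simp add: powr_add[symmetric])
      also have "\<dots> = 2 powr (- real mW)" by simp
      also have "\<dots> = 1 / 2 ^ mW" by (simp add: powr_minus powr_realpow divide_inverse)
      finally show ?thesis .
    qed
    have Ecar: "E \<in> carrier_mat (card SW) mW" unfolding E_def by simp
    have Eij: "E $$ (i, j) = c * (\<Sum>x\<in>?P. x ! j * eta (sl ! i) (x, 0)) / sqrt (w (sl ! i))"
      if "i < card SW" "j < mW" for i j
      using that unfolding E_def c_def w_def sl_def by (simp add: Let_def)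
    have "\<sigma> \<ge> 0" and ev: "eigenvalue (transpose_mat E * E) (\<sigma>\<^sup>2)"
      using sv unfolding singular_value_def by auto
    then obtain v where v: "v \<in> carrier_vec mW" "v \<noteq> 0\<^sub>v mW"
      and vev: "(transpose_mat E * E) *\<^sub>v v = \<sigma>\<^sup>2 \<cdot>\<^sub>v v"
      unfolding eigenvalue_def eigenvector_def using Ecar by auto
    define u where "u = E *\<^sub>v v"
    have ucar: "u \<in> carrier_vec (card SW)" unfolding u_def using Ecar v by simp
    have "\<sigma>\<^sup>2 * (v \<bullet> v) = (\<sigma>\<^sup>2 \<cdot>\<^sub>v v) \<bullet> v" using v by simp
    also have "\<dots> = (transpose_mat E *\<^sub>v u) \<bullet> v"
      unfolding vev[symmetric] u_def using Ecar v
      by (subst assoc_mult_mat_vec[of _ mW "card SW" _ mW]) auto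
    also have "\<dots> = u \<bullet> u"
      unfolding u_def using Ecar v ucar u_def by (simp add: transpose_vec_mult_scalar)
    finally have key: "\<sigma>\<^sup>2 * (v \<bullet> v) = u \<bullet> u" .
    define L where "L x = (\<Sum>j<mW. x ! j * v $ j)" for x :: "real list"
    define F where "F s = c / sqrt (w s) * (\<Sum>x\<in>?P. L x * eta s (x, 0))" for s
    have vv: "v \<bullet> v = (\<Sum>j<mW. (v $ j)\<^sup>2)"
      using v unfolding scalar_prod_def by (simp add: power2_eq_square lessThan_atLeast0)
    have vpos: "v \<bullet> v > 0"
    proof -
      obtain j where j: "j < mW" "v $ j \<noteq> 0"
        using v by (metis carrier_vecD eq_vecI index_zero_vec(1,2))
      have "(v $ j)\<^sup>2 \<le> (\<Sum>j<mW. (v $ j)\<^sup>2)" by (rule member_le_sum) (use j in auto)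
      moreover have "(v $ j)\<^sup>2 > 0" using j by simp
      ultimately show ?thesis using vv by linarith
    qed
    have ui: "u $ i = F (sl ! i)" if i: "i < card SW" for i
    proof -
      let ?s = "sl ! i"
      have "u $ i = (\<Sum>j<mW. E $$ (i, j) * v $ j)"
        unfolding u_def using Ecar v i by (simp add: scalar_prod_def lessThan_atLeast0)
      also have "\<dots> = (\<Sum>j<mW. c / sqrt (w ?s) * (\<Sum>x\<in>?P. x ! j * v $ j * eta ?s (x, 0)))"
        using i by (intro sum.cong) (auto simp: Eij sum_distrib_left sum_distrib_right sum_divide_distrib mult_ac)
      also have "\<dots> = c / sqrt (w ?s) * (\<Sum>x\<in>?P. \<Sum>j<mW. x ! j * v $ j * eta ?s (x, 0))"
        by (subst sum.swap) (simp add: sum_divide_distrib sum_distrib_left)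
      also have "\<dots> = F ?s" unfolding F_def L_def by (simp add: sum_distrib_right)
      finally show ?thesis .
    qed
    have Fle: "(F s)\<^sup>2 \<le> c\<^sup>2 * (\<Sum>x\<in>?P. (L x)\<^sup>2 * eta s (x, 0))" if s: "s \<in> SW" for s
    proof -
      have wpos: "w s > 0" using s unfolding SW_def w_def by auto
      have s': "s \<in> {1..m}" using s SWsub by auto
      have "(F s)\<^sup>2 = c\<^sup>2 * ((\<Sum>x\<in>?P. L x * eta s (x, 0))\<^sup>2 / w s)"
        unfolding F_def using wpos by (simp add: power_mult_distrib power_divide)
      also have "\<dots> \<le> c\<^sup>2 * (\<Sum>x\<in>?P. (L x)\<^sup>2 * eta s (x, 0))"
        using wcs[OF finP, of "\<lambda>x. eta s (x, 0)" L] nonneg s' wpos unfolding w_def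
        by (intro mult_left_mono) auto
      finally show ?thesis .
    qed
    have "u \<bullet> u = (\<Sum>i<card SW. (F (sl ! i))\<^sup>2)"
      using ucar unfolding scalar_prod_def by (simp add: ui power2_eq_square lessThan_atLeast0)
    also have "\<dots> = (\<Sum>s\<in>SW. (F s)\<^sup>2)"
      using sum.reindex_bij_betw[OF bij_betw_nth[OF sl(1) refl sl(2)[symmetric]], of "\<lambda>s. (F s)\<^sup>2"]
      by (simp add: sl(3))
    also have "\<dots> \<le> (\<Sum>s\<in>SW. c\<^sup>2 * (\<Sum>x\<in>?P. (L x)\<^sup>2 * eta s (x, 0)))"
      by (rule sum_mono) (rule Fle)
    also have "\<dots> = c\<^sup>2 * (\<Sum>x\<in>?P. (L x)\<^sup>2 * (\<Sum>s\<in>SW. eta s (x, 0)))"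
      by (simp add: sum_distrib_left sum.swap[of _ SW])
    also have "\<dots> \<le> c\<^sup>2 * (\<Sum>x\<in>?P. (L x)\<^sup>2 * 1)"
      by (intro mult_left_mono sum_mono mult_left_mono) (use colle SWsub in auto)
    also have "\<dots> = c\<^sup>2 * (2 ^ mW * (\<Sum>j<mW. (v $ j)\<^sup>2))"
      unfolding L_def using pm_sq[where n=mW and v="\<lambda>j. v $ j"] by simp
    also have "\<dots> = v \<bullet> v" using c2 vv by simp
    finally have "\<sigma>\<^sup>2 * (v \<bullet> v) \<le> 1 * (v \<bullet> v)" using key by simp
    then have "\<sigma>\<^sup>2 \<le> 1" using vpos by (simp only: mult_le_cancel_right)
    then show ?thesis using \<open>\<sigma> \<ge> 0\<close> by (simp add: power_le_one_iff abs_square_le_1)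
  qed
  show ?thesis using part1 part2 part3 by blast
qed

end
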